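(* Let $k,n,x^*$ be positive integers, $p\in(0,1)$, and let $a$ be a binary string which is a cyclic shift of $10^{a_1}10^{a_2}\cdots10^{a_k}$ with $a_1,\dots,a_k$ nonnegative integers. Put $n'=pn$ and $b_j=a_j-n(1-p)$ for $j\in[k]$. Then there is a function $\mathrm{Sym}(\cdot\,;n,p,b,x^* )$ on $\{0,1,\dots,x^*\}^k$, depending only on $n,p,b,x^*$ and invariant under permutations of its $k$ arguments, such that for every $(x_1,\dots,x_k)\in\{0,\dots,x^*\}^k$, letting $x$ denote the binary string $10^{n+x_1}10^{n+x_2}\cdots10^{n+x_k}$, $$\Pr_{\tilde{x}\sim\mathrm{Del}(x)}[\tilde{x}=a]=\mathrm{Sym}(x;n,p,b,x^* )\sum_{i=1}^{k}\prod_{j=1}^{k}\prod_{h=x_j+1}^{x^*}\left(n'-b_{j+i}+h\right),$$ where indices of $b$ are taken modulo $k$.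
   Context: $0^t$ denotes $t$ consecutive zeros. The circular deletion channel $\mathrm{Del}(x)$ with deletion probability $p$ deletes each bit of $x$ independently with probability $p$ and then returns a uniformly random cyclic shift of the resulting string. *)

theory Defs
  imports Main "HOL-Library.Multiset" Complex_Main
begin

text \<open>Circular deletion channel: each bit of x is deleted independently with
probability p (the kept positions form a set S), then a uniformly random cyclic
shift (rotate r, r uniform in {0..<|S|}) of the remaining string is returned.
del_prob p x a is the probability that the output equals a.\<close>
definition del_prob :: "real \<Rightarrow> bool list \<Rightarrow> bool list \<Rightarrow> real" where
  "del_prob p x a =
     (\<Sum>S\<in>Pow {..<length x}.
        p ^ (length x - card S) * (1 - p) ^ (card S) *
        (if card S = 0 then (if a = [] then 1 else 0)
         else real (card {r\<in>{..<card S}. rotate r (nths x S) = a}) / real (card S)))"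

text \<open>The string 1 0^(c_1) 1 0^(c_2) ... 1 0^(c_k) (True = 1, False = 0).\<close>
definition block_string :: "nat list \<Rightarrow> bool list" where
  "block_string cs = concat (map (\<lambda>c. True # replicate c False) cs)"

end

theory Submission
  imports Defs
begin

definition emb :: "bool list \<Rightarrow> bool list \<Rightarrow> real" where
  "emb x y = (\<Sum>S\<in>Pow {..<length x}. if nths x S = y then 1 else 0)"

lemma Pow_lessThan_Suc:
  "Pow {..<Suc m} = (\<lambda>T. Suc ` T) ` Pow {..<m} \<union> (\<lambda>T. insert 0 (Suc ` T)) ` Pow {..<m}"
proof (rule set_eqI, rule iffI)
  fix S assume S: "S \<in> Pow {..<Suc m}"
  define T where "T = {j. Suc j \<in> S}"
  have T: "T \<in> Pow {..<m}" using S by (auto simp: T_def)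
  show "S \<in> (\<lambda>T. Suc ` T) ` Pow {..<m} \<union> (\<lambda>T. insert 0 (Suc ` T)) ` Pow {..<m}"
  proof (cases "0 \<in> S")
    case True
    have "S = insert 0 (Suc ` T)" using True
      by (auto simp: T_def image_iff) (metis not0_implies_Suc)
    then show ?thesis using T by blast
  next
    case False
    have "S = Suc ` T" using False
      by (auto simp: T_def image_iff) (metis not0_implies_Suc)
    then show ?thesis using T by blast
  qed
qed auto

lemma sum_Pow_Cons:
  "(\<Sum>S\<in>Pow {..<length (a#x)}. g (nths (a#x) S)) =
   (\<Sum>T\<in>Pow {..<length x}. g (a # nths x T)) + (\<Sum>T\<in>Pow {..<length x}. g (nths x T))"
proof -
  let ?m = "length x"
  have d: "(\<lambda>T. Suc ` T) ` Pow {..<?m} \<inter> (\<lambda>T. insert 0 (Suc ` T)) ` Pow {..<?m} = {}" by auto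
  have i1: "inj_on (\<lambda>T. Suc ` T) (Pow {..<?m})"
    by (meson inj_Suc inj_image_eq_iff inj_onI)
  have i2: "inj_on (\<lambda>T. insert 0 (Suc ` T)) (Pow {..<?m})"
  proof (rule inj_onI)
    fix A B assume "insert 0 (Suc ` A) = insert (0::nat) (Suc ` B)"
    then have "Suc ` A = Suc ` B" by (metis Diff_insert_absorb image_iff nat.distinct(1))
    then show "A = B" by (meson inj_Suc inj_image_eq_iff)
  qed
  have n1: "nths (a#x) (Suc ` T) = nths x T" for T
    by (simp add: nths_Cons image_iff)
  have n2: "nths (a#x) (insert 0 (Suc ` T)) = a # nths x T" for T
    by (simp add: nths_Cons image_iff)
  have "(\<Sum>S\<in>Pow {..<length (a#x)}. g (nths (a#x) S)) =
     (\<Sum>S\<in>(\<lambda>T. Suc ` T) ` Pow {..<?m}. g (nths (a#x) S)) +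
     (\<Sum>S\<in>(\<lambda>T. insert 0 (Suc ` T)) ` Pow {..<?m}. g (nths (a#x) S))"
    by (simp only: length_Cons Pow_lessThan_Suc, rule sum.union_disjoint) (use d in auto)
  also have "\<dots> = (\<Sum>T\<in>Pow {..<?m}. g (nths x T)) + (\<Sum>T\<in>Pow {..<?m}. g (a # nths x T))"
    by (simp add: sum.reindex[OF i1] sum.reindex[OF i2] n1 n2)
  finally show ?thesis by (simp add: ac_simps)
qed

lemma emb_Nil: "emb [] y = (if y = [] then 1 else 0)"
  by (simp add: emb_def)

lemma emb_Cons: "emb (a#x) y = (\<Sum>T\<in>Pow {..<length x}. if a # nths x T = y then 1 else 0) + emb x y"
  unfolding emb_def by (rule sum_Pow_Cons)

lemma emb_Cons_Nil: "emb x [] = 1"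
  by (induction x) (simp_all add: emb_Nil emb_Cons)

lemma emb_Cons_Cons: "emb (a#x) (b#y) = (if a = b then emb x y else 0) + emb x (b#y)"
  unfolding emb_Cons by (simp add: emb_def)

definition ct :: "bool list \<Rightarrow> nat" where "ct y = length (filter id y)"

lemma ct_simps[simp]: "ct [] = 0" "ct (a#y) = (if a then Suc (ct y) else ct y)"
  "ct (u @ v) = ct u + ct v" "ct (replicate m False) = 0"
  by (simp_all add: ct_def)

lemma ct_rotate[simp]: "ct (rotate r y) = ct y"
  unfolding ct_def rotate_drop_take by (metis append_take_drop_id filter_append length_append add.commute)

lemma emb_ct: "ct x < ct y \<Longrightarrow> emb x y = 0"
proof (induction x arbitrary: y)
  case Nil then show ?case by (auto simp: emb_Nil)
next
  case (Cons a x)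
  then obtain b y' where y: "y = b # y'" by (cases y) auto
  show ?case using Cons by (auto simp: y emb_Cons_Cons split: if_splits)
qed

lemma emb_rep:
  assumes "ct R = ct R'" "R \<noteq> [] \<Longrightarrow> hd R" "R' \<noteq> [] \<Longrightarrow> hd R'"
  shows "emb (replicate m False @ R) (replicate c False @ R') = real (m choose c) * emb R R'"
  using assms
proof (induction m arbitrary: c)
  case 0
  show ?case
  proof (cases c)
    case 0 then show ?thesis by simp
  next
    case (Suc c')
    have "emb R (replicate c False @ R') = 0"
    proof (cases R)
      case Nil then show ?thesis using Suc by (simp add: emb_Nil)
    next
      case (Cons r R2)
      then have r: "r" using "0.prems" by simp
      show ?thesis using Suc Cons r "0.prems"
        by (simp add: emb_Cons_Cons emb_ct)
    qed
    then show ?thesis using Suc by simp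
  qed
next
  case (Suc m)
  show ?case
  proof (cases c)
    case 0
    show ?thesis
    proof (cases R')
      case Nil
      then show ?thesis using 0 by (simp add: emb_Cons_Nil)
    next
      case (Cons r' R2)
      then have "r'" using Suc.prems by simp
      then show ?thesis using 0 Cons Suc.IH[of 0] Suc.prems
        by (simp add: emb_Cons_Cons)
    qed
  next
    case (Suc c')
    then show ?thesis using Suc.IH[of c'] Suc.IH[of c] Suc.prems
      by (simp add: emb_Cons_Cons algebra_simps)
  qed
qed

lemma block_string_simps[simp]: "block_string [] = []"
  "block_string (m#cs) = True # replicate m False @ block_string cs"
  "block_string (u @ v) = block_string u @ block_string v"
  by (simp_all add: block_string_def)

lemma ct_block[simp]: "ct (block_string cs) = length cs"
  by (induction cs) auto

lemma hd_block: "block_string cs \<noteq> [] \<Longrightarrow> hd (block_string cs)"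
  by (cases cs) auto

lemma length_block: "length (block_string cs) = length cs + sum_list cs"
  by (induction cs) auto

lemma emb_block:
  "length ys = length cs \<Longrightarrow>
   emb (block_string ys) (block_string cs) = (\<Prod>j<length ys. real (ys!j choose cs!j))"
proof (induction ys cs rule: list_induct2)
  case Nil then show ?case by (simp add: emb_Nil)
next
  case (Cons m ys c cs)
  have z: "emb (replicate m False @ block_string ys) (True # replicate c False @ block_string cs) = 0"
    by (rule emb_ct) (simp add: Cons.hyps)
  have "emb (block_string (m#ys)) (block_string (c#cs)) =
     real (m choose c) * emb (block_string ys) (block_string cs)"
    by (simp add: emb_Cons_Cons z emb_rep Cons.hyps hd_block)
  moreover have "(\<Prod>j<length (m#ys). real ((m#ys)!j choose (c#cs)!j)) =
     real (m choose c) * (\<Prod>j<length ys. real (ys!j choose cs!j))"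
    by (simp only: length_Cons prod.lessThan_Suc_shift) simp
  ultimately show ?case using Cons.IH by simp
qed

lemma per_shift:
  fixes f :: "nat \<Rightarrow> real"
  assumes per: "\<And>t. f (t + L) = f t"
  shows "(\<Sum>r<L. f (r + s)) = (\<Sum>r<L. f r)"
proof (induction s)
  case 0 then show ?case by simp
next
  case (Suc s)
  have "(\<Sum>r<Suc L. f (r + s)) = f s + (\<Sum>r<L. f (Suc r + s))"
    by (simp only: sum.lessThan_Suc_shift) simp
  moreover have "(\<Sum>r<Suc L. f (r + s)) = (\<Sum>r<L. f (r + s)) + f s"
    using per[of s] by (simp add: add.commute)
  ultimately show ?case using Suc by simp
qed

lemma per_rev:
  fixes f :: "nat \<Rightarrow> real"
  assumes per: "\<And>t. f (t + L) = f t"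
  shows "(\<Sum>r<L. f (L - r)) = (\<Sum>r<L. f r)"
proof -
  have "(\<Sum>r<L. f (L - r)) = (\<Sum>i<L. (\<lambda>j. f (Suc j)) (L - Suc i))"
    by (rule sum.cong) (auto simp: Suc_diff_Suc)
  also have "\<dots> = (\<Sum>i<L. f (i + 1))"
    by (subst sum.nat_diff_reindex) simp
  also have "\<dots> = (\<Sum>r<L. f r)" using per_shift[of f L 1, OF per] by simp
  finally show ?thesis .
qed

lemma sum_rot_block:
  assumes k: "length as = k" "k > 0" and ys: "length ys = k"
  shows "(\<Sum>t<length (block_string as). emb (block_string ys) (rotate t (block_string as))) =
         (\<Sum>i<k. emb (block_string ys) (block_string (rotate i as)))"
proof -
  define z where "z = block_string as"
  define L where "L = length z"
  define x where "x = block_string ys"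
  define pos where "pos i = length (block_string (take i as))" for i
  have rot: "rotate (pos i) z = block_string (rotate i as)" if "i < k" for i
  proof -
    have "rotate i as = drop i as @ take i as" using that k by (simp add: rotate_drop_take)
    moreover have "z = block_string (take i as) @ block_string (drop i as)"
      by (simp add: z_def flip: block_string_simps(3))
    ultimately show ?thesis by (simp add: pos_def rotate_append)
  qed
  have nth: "pos i < L \<and> z ! pos i" if "i < k" for i
  proof -
    have d: "drop i as = as!i # drop (Suc i) as" using that k by (simp add: Cons_nth_drop_Suc)
    have "z = block_string (take i as) @ block_string (drop i as)"
      by (simp add: z_def flip: block_string_simps(3))
    then show ?thesis by (simp add: d pos_def L_def nth_append)
  qed
  have mono: "pos i < pos j" if "i < j" "j \<le> k" for i j
  proof -
    have "take j as = take i as @ take (j - i) (drop i as)"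
      using that by (metis le_add_diff_inverse less_imp_le take_add)
    moreover have "take (j - i) (drop i as) \<noteq> []" using that k by simp
    ultimately show ?thesis by (simp add: pos_def length_block)
  qed
  have inj: "inj_on pos {..<k}"
    by (rule inj_onI) (metis lessThan_iff linorder_neqE_nat mono less_imp_le nat_less_le)
  define P where "P = {t. t < L \<and> z ! t}"
  have cP: "card P = k"
    using length_filter_conv_card[of id z] ct_block[of as] k by (simp add: P_def ct_def z_def L_def)
  have sub: "pos ` {..<k} \<subseteq> P" using nth by (auto simp: P_def)
  have Peq: "pos ` {..<k} = P"
  proof (rule card_subset_eq)
    show "finite P" by (simp add: P_def)
    show "card (pos ` {..<k}) = card P" using card_image[OF inj] cP by simp
  qed (rule sub)
  have zero: "emb x (rotate t z) = 0" if "t < L" "\<not> z ! t" for t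
  proof -
    have ne: "rotate t z \<noteq> []" using that by (auto simp: L_def)
    have "z \<noteq> []" using that by (auto simp: L_def)
    then have "hd (rotate t z) = z ! t" using that by (simp add: L_def hd_rotate_conv_nth)
    then have w: "rotate t z = False # tl (rotate t z)" using ne that by (cases "rotate t z") auto
    define w where "w = tl (rotate t z)"
    note w = w[folded w_def]
    obtain y ys' where yy: "ys = y # ys'" using ys k by (cases ys) auto
    have ctw: "ct (False # w) = k" using w ct_rotate[of t z] k by (simp add: z_def)
    have "x = True # (replicate y False @ block_string ys')" by (simp add: x_def yy)
    moreover have "ct (replicate y False @ block_string ys') < k" using yy ys by simp
    ultimately show ?thesis using w ctw by (simp add: emb_Cons_Cons emb_ct)
  qed
  have "(\<Sum>t<L. emb x (rotate t z)) = (\<Sum>t\<in>P. emb x (rotate t z))"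
    by (rule sum.mono_neutral_right) (use zero in \<open>auto simp: P_def\<close>)
  also have "\<dots> = (\<Sum>i<k. emb x (rotate (pos i) z))"
    by (simp add: Peq[symmetric] sum.reindex[OF inj])
  also have "\<dots> = (\<Sum>i<k. emb x (block_string (rotate i as)))"
    by (rule sum.cong) (auto simp: rot)
  finally show ?thesis by (simp add: x_def z_def L_def)
qed

lemma card_sum_if: "finite A \<Longrightarrow> real (card {r\<in>A. P r}) = (\<Sum>r\<in>A. if P r then 1 else 0)"
  using sum.inter_filter[of A "\<lambda>_. 1::real" P] by simp

lemma del_prob_emb:
  assumes aL: "length a = L" and L: "L > 0"
  shows "del_prob p x a = p^(length x - L) * (1-p)^L / L * (\<Sum>r<L. emb x (rotate (L - r) a))"
proof -
  define C where "C = p^(length x - L) * (1-p)^L / L"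
  have rot_iff: "(rotate r y = a) = (y = rotate (L - r) a)" if "r < L" for r y
  proof
    assume h: "rotate r y = a"
    then have "length y = L" using aL length_rotate by metis
    then show "y = rotate (L - r) a" using that by (simp add: h[symmetric] rotate_rotate)
  next
    assume "y = rotate (L - r) a"
    then show "rotate r y = a" using that aL by (simp add: rotate_rotate)
  qed
  have eq1: "p ^ (length x - card S) * (1 - p) ^ (card S) *
        (if card S = 0 then (if a = [] then 1 else 0)
         else real (card {r\<in>{..<card S}. rotate r (nths x S) = a}) / real (card S))
      = C * (\<Sum>r<L. if nths x S = rotate (L - r) a then 1 else 0)"
    if S: "S \<in> Pow {..<length x}" for S
  proof -
    have "{i. i < length x \<and> i \<in> S} = S" using S by auto
    then have cS: "card S = length (nths x S)"
      by (simp add: length_nths)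
    have cs: "real (card {r\<in>{..<L}. rotate r (nths x S) = a}) = (\<Sum>r<L. if nths x S = rotate (L - r) a then 1 else 0)"
      by (subst card_sum_if) (auto intro!: sum.cong simp: rot_iff)
    show ?thesis
    proof (cases "card S = L")
      case True
      then show ?thesis using L by (simp add: C_def cs[symmetric])
    next
      case False
      have e: "{r\<in>A. rotate r (nths x S) = a} = {}" for A
        using False cS aL by auto
      have "(\<Sum>r<L. if nths x S = rotate (L - r) a then 1 else (0::real)) = 0"
        using cs[unfolded e[of "{..<L}"]] by simp
      moreover have "a \<noteq> []" using aL L by auto
      ultimately show ?thesis unfolding e[of "{..<card S}"] by simp
    qed
  qed
  have "del_prob p x a = (\<Sum>S\<in>Pow {..<length x}. C * (\<Sum>r<L. if nths x S = rotate (L - r) a then 1 else 0))"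
    unfolding del_prob_def by (rule sum.cong) (auto simp: eq1)
  also have "\<dots> = C * (\<Sum>r<L. emb x (rotate (L - r) a))"
    by (simp add: sum_distrib_left[symmetric] emb_def sum.swap[of _ "Pow _"])
  finally show ?thesis by (simp add: C_def)
qed

lemma del_prob_main:
  assumes k: "length as = k" "k > 0" and ys: "length ys = k"
  shows "del_prob p (block_string ys) (rotate s (block_string as)) =
    p^(length (block_string ys) - length (block_string as)) * (1-p)^(length (block_string as))
     / length (block_string as) *
    (\<Sum>i<k. \<Prod>j<k. real (ys!j choose rotate i as ! j))"
proof -
  define z where "z = block_string as"
  define L where "L = length z"
  define x where "x = block_string ys"
  have L: "L > 0" using k by (cases as) (auto simp: L_def z_def)
  have "del_prob p x (rotate s z) = p^(length x - L) * (1-p)^L / L * (\<Sum>r<L. emb x (rotate (L - r) (rotate s z)))"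
    by (rule del_prob_emb[OF _ L]) (simp add: L_def)
  also have "(\<Sum>r<L. emb x (rotate (L - r) (rotate s z))) = (\<Sum>r<L. (\<lambda>t. emb x (rotate (t + s) z)) (L - r))"
    by (simp add: rotate_rotate)
  also have "\<dots> = (\<Sum>r<L. emb x (rotate (r + s) z))"
  proof (rule per_rev)
    fix t show "emb x (rotate (t + L + s) z) = emb x (rotate (t + s) z)"
      by (metis L_def add.commute add.left_commute mod_add_self2 rotate_conv_mod)
  qed
  also have "\<dots> = (\<Sum>r<L. emb x (rotate r z))"
  proof (rule per_shift)
    fix t show "emb x (rotate (t + L) z) = emb x (rotate t z)"
      by (metis L_def mod_add_self2 rotate_conv_mod)
  qed
  also have "\<dots> = (\<Sum>i<k. emb x (block_string (rotate i as)))"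
    using sum_rot_block[OF k ys] by (simp add: L_def z_def x_def)
  also have "\<dots> = (\<Sum>i<k. \<Prod>j<k. real (ys!j choose rotate i as ! j))"
    by (rule sum.cong) (auto simp: x_def emb_block ys k)
  finally show ?thesis by (simp add: x_def z_def L_def)
qed

lemma Qprod: "x \<le> X \<Longrightarrow> (\<Prod>h=x+1..X. real (d + h - x)) * fact d = fact (d + X - x)"
proof (induction X rule: dec_induct)
  case base then show ?case by simp
next
  case (step X)
  have "(\<Prod>h=x+1..Suc X. real (d + h - x)) = (\<Prod>h=x+1..X. real (d + h - x)) * real (d + Suc X - x)"
    using step by (simp add: prod.cl_ivl_Suc)
  moreover have "d + Suc X - x = Suc (d + X - x)" using step by simp
  ultimately have "(\<Prod>h=x+1..Suc X. real (d + h - x)) * fact d =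
      ((\<Prod>h=x+1..X. real (d + h - x)) * fact d) * real (Suc (d + X - x))"
    by (simp only: ac_simps)
  also have "\<dots> = fact (Suc (d + X - x))" using step.IH by (simp only: fact_Suc ac_simps)
  finally show ?case using \<open>d + Suc X - x = Suc (d + X - x)\<close> by simp
qed

lemma binom_Q:
  assumes "x \<le> X" "a \<le> n + X"
  shows "real ((n+x) choose a) = fact (n+x) * (1 / (fact a * fact (n + X - a))) *
     (\<Prod>h=x+1..X. real n - real a + real h)"
proof (cases "a \<le> n + x")
  case True
  define d where "d = n + x - a"
  have "(\<Prod>h=x+1..X. real n - real a + real h) = (\<Prod>h=x+1..X. real (d + h - x))"
    by (rule prod.cong) (use True in \<open>auto simp: d_def of_nat_diff\<close>)
  moreover have "n + X - a = d + X - x" using True assms by (simp add: d_def)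
  moreover have "(\<Prod>h=x+1..X. real (d + h - x)) = fact (d + X - x) / fact d"
    using Qprod[OF assms(1), of d] by (simp add: field_simps)
  ultimately show ?thesis using True
    by (simp add: binomial_fact d_def)
next
  case False
  have "(\<Prod>h=x+1..X. real n - real a + real h) = 0"
    using False assms by (subst prod_zero_iff) (auto intro!: bexI[of _ "a - n"])
  moreover have "(n+x) choose a = 0" using False by (simp add: binomial_eq_0)
  ultimately show ?thesis by (simp only:)
qed

lemma prod_list_nth: "prod_list (map f xs) = (\<Prod>j<length xs. f (xs!j))"
proof (induction xs)
  case Nil then show ?case by simp
next
  case (Cons a xs)
  then show ?case by (simp only: length_Cons prod.lessThan_Suc_shift) simp
qed

lemma prod_list_rotate: "prod_list (rotate i (xs :: real list)) = prod_list xs"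
  by (metis append_take_drop_id mult.commute prod_list.append rotate_drop_take)

theorem lemma5p1:
  fixes k n xstar :: nat and p :: real and as :: "nat list"
  assumes "k > 0" and "n > 0" and "xstar > 0"
    and "0 < p" and "p < 1"
    and "length as = k"
  defines "n' \<equiv> p * real n"
    and "b \<equiv> (\<lambda>j::nat. real (as ! ((j - 1) mod k)) - real n * (1 - p))"
  shows "\<exists>Sym :: nat list \<Rightarrow> real.
     (\<forall>xs ys. length xs = k \<and> set xs \<subseteq> {0..xstar} \<and> mset ys = mset xs
        \<longrightarrow> Sym ys = Sym xs) \<and>
     (\<forall>s a xs. a = rotate s (block_string as) \<and> length xs = k \<and> set xs \<subseteq> {0..xstar} \<longrightarrow>
        del_prob p (block_string (map (\<lambda>c. n + c) xs)) a =
          Sym xs * (\<Sum>i=1..k. \<Prod>j=1..k. \<Prod>h=xs ! (j - 1) + 1..xstar.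
                       (n' - b (j + i) + real h)))"
proof -
  note k = assms(6) assms(1)
  define L where "L = length (block_string as)"
  define good where "good = (\<forall>m<k. as!m \<le> n + xstar)"
  define D where "D = (\<lambda>x::nat. fact (n+x) :: real)"
  define E where "E = (\<lambda>a::nat. 1 / (fact a * fact (n + xstar - a)) :: real)"
  define Q where "Q = (\<lambda>a x::nat. \<Prod>h=x+1..xstar. real n - real a + real h)"
  define Sym where "Sym = (\<lambda>xs. if good then p^(length (block_string (map (\<lambda>c. n + c) xs)) - L)
      * (1-p)^L / L * prod_list (map D xs) * prod_list (map E as) else 0)"
  have symm: "Sym ys = Sym xs" if "mset ys = mset xs" for xs ys
  proof -
    have m: "mset (map f ys) = mset (map f xs)" for f :: "nat \<Rightarrow> 'b" using that by simp
    have "length ys = length xs" using that by (metis size_mset)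
    moreover have "sum_list (map (\<lambda>c. n + c) ys) = sum_list (map (\<lambda>c. n + c) xs)"
      by (metis m sum_mset_sum_list)
    moreover have "prod_list (map D ys) = prod_list (map D xs)"
      by (metis m prod_mset_prod_list)
    ultimately show ?thesis by (simp add: Sym_def length_block)
  qed
  have Rr: "(\<Sum>i=1..k. \<Prod>j=1..k. \<Prod>h=xs ! (j - 1) + 1..xstar. (n' - b (j + i) + real h))
      = (\<Sum>i<k. \<Prod>j<k. Q (rotate i as ! j) (xs!j))" for xs :: "nat list"
  proof -
    define U where "U i = (\<Prod>j<k. Q (as!((j+i) mod k)) (xs!j))" for i
    have t: "(\<Prod>j=1..k. \<Prod>h=xs ! (j - 1) + 1..xstar. (n' - b (j + i) + real h)) = U i" for i
    proof -
      have "(\<Prod>j=1..k. \<Prod>h=xs ! (j - 1) + 1..xstar. (n' - b (j + i) + real h))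
          = (\<Prod>j<k. \<Prod>h=xs ! j + 1..xstar. (n' - b (Suc j + i) + real h))"
        by (simp only: One_nat_def prod.atLeast1_atMost_eq) simp
      also have "\<dots> = U i" unfolding U_def Q_def
        by (rule prod.cong[OF refl], rule prod.cong[OF refl]) (simp add: n'_def b_def algebra_simps)
      finally show ?thesis .
    qed
    have "(\<Sum>i=1..k. \<Prod>j=1..k. \<Prod>h=xs ! (j - 1) + 1..xstar. (n' - b (j + i) + real h))
        = (\<Sum>i=1..k. U i)"
      by (rule sum.cong[OF refl]) (rule t)
    also have "\<dots> = (\<Sum>i<k. U (i + 1))"
      by (simp only: One_nat_def sum.atLeast1_atMost_eq) simp
    also have "\<dots> = (\<Sum>i<k. U i)"
      by (rule per_shift) (simp add: U_def add.assoc[symmetric])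
    also have "\<dots> = (\<Sum>i<k. \<Prod>j<k. Q (rotate i as ! j) (xs!j))"
      by (intro sum.cong prod.cong refl) (simp add: U_def nth_rotate k add.commute)
    finally show ?thesis .
  qed
  have main: "del_prob p (block_string (map (\<lambda>c. n + c) xs)) (rotate s (block_string as)) =
     Sym xs * (\<Sum>i<k. \<Prod>j<k. Q (rotate i as ! j) (xs!j))"
    if len: "length xs = k" and rng: "set xs \<subseteq> {0..xstar}" for s xs
  proof -
    define ys where "ys = map (\<lambda>c. n + c) xs"
    have lys: "length ys = k" using len by (simp add: ys_def)
    define C where "C = p^(length (block_string ys) - L) * (1-p)^L / L"
    have dp: "del_prob p (block_string ys) (rotate s (block_string as)) =
       C * (\<Sum>i<k. \<Prod>j<k. real (ys!j choose rotate i as ! j))"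
      using del_prob_main[OF k lys] by (simp add: C_def L_def)
    have xj: "xs!j \<le> xstar" if "j < k" for j using rng len that
      by (metis atLeastAtMost_iff nth_mem subsetD)
    have ra: "\<exists>m<k. rotate i as ! j = as ! m" if "j < k" for i j
    proof -
      have "rotate i as ! j \<in> set as" using that k by (metis length_rotate nth_mem set_rotate)
      then show ?thesis using k by (metis in_set_conv_nth)
    qed
    show ?thesis
    proof (cases good)
      case True
      have "(\<Prod>j<k. real (ys!j choose rotate i as ! j)) =
          prod_list (map D xs) * prod_list (map E as) * (\<Prod>j<k. Q (rotate i as ! j) (xs!j))" for i
      proof -
        have "(\<Prod>j<k. real (ys!j choose rotate i as ! j)) =
           (\<Prod>j<k. D (xs!j) * E (rotate i as ! j) * Q (rotate i as ! j) (xs!j))"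
        proof (rule prod.cong[OF refl])
          fix j assume "j \<in> {..<k}"
          then have j: "j < k" by simp
          obtain m where m: "m < k" "rotate i as ! j = as ! m" using ra[OF j] by blast
          have "as ! m \<le> n + xstar" using True m good_def by blast
          then show "real (ys!j choose rotate i as ! j) = D (xs!j) * E (rotate i as ! j) * Q (rotate i as ! j) (xs!j)"
            using binom_Q[OF xj[OF j], of "as ! m" n] j len m
            by (simp add: ys_def D_def E_def Q_def)
        qed
        also have "\<dots> = (\<Prod>j<k. D (xs!j)) * (\<Prod>j<k. E (rotate i as ! j)) * (\<Prod>j<k. Q (rotate i as ! j) (xs!j))"
          by (simp add: prod.distrib)
        also have "(\<Prod>j<k. D (xs!j)) = prod_list (map D xs)" by (simp add: prod_list_nth len)
        also have "(\<Prod>j<k. E (rotate i as ! j)) = prod_list (map E as)"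
        proof -
          have "(\<Prod>j<k. E (rotate i as ! j)) = prod_list (map E (rotate i as))"
            by (simp add: prod_list_nth k)
          also have "\<dots> = prod_list (rotate i (map E as))" by (simp add: rotate_map)
          also have "\<dots> = prod_list (map E as)" by (rule prod_list_rotate)
          finally show ?thesis .
        qed
        finally show ?thesis .
      qed
      then show ?thesis using dp True
        by (simp add: ys_def Sym_def C_def sum_distrib_left mult.assoc)
    next
      case False
      then obtain m where m: "m < k" "as ! m > n + xstar" unfolding good_def by auto
      have z0: "(\<Prod>j<k. real (ys!j choose rotate i as ! j)) = 0" for i
      proof -
        have "as ! m \<in> set (rotate i as)" using m k by simp
        then obtain j where j: "j < k" "rotate i as ! j = as ! m" using k
          by (metis in_set_conv_nth length_rotate)
        have "ys ! j < as ! m" using xj[OF j(1)] m j len by (simp add: ys_def)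
        then have "real (ys!j choose rotate i as ! j) = 0" using j by (simp add: binomial_eq_0)
        then show ?thesis using j by (metis finite_lessThan lessThan_iff prod_zero_iff)
      qed
      have S0: "(\<Sum>i<k. \<Prod>j<k. real (ys!j choose rotate i as ! j)) = 0"
        by (intro sum.neutral) (use z0 in blast)
      show ?thesis unfolding ys_def[symmetric] using dp S0 False by (simp add: Sym_def)
    qed
  qed
  show ?thesis
  proof (intro exI[of _ Sym] conjI allI impI)
    fix xs ys :: "nat list"
    assume "length xs = k \<and> set xs \<subseteq> {0..xstar} \<and> mset ys = mset xs"
    then show "Sym ys = Sym xs" using symm by blast
  next
    fix s a and xs :: "nat list"
    assume h: "a = rotate s (block_string as) \<and> length xs = k \<and> set xs \<subseteq> {0..xstar}"
    then show "del_prob p (block_string (map (\<lambda>c. n + c) xs)) a =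
          Sym xs * (\<Sum>i=1..k. \<Prod>j=1..k. \<Prod>h=xs ! (j - 1) + 1..xstar.
                       (n' - b (j + i) + real h))"
      unfolding Rr using main[of xs s] h by simp
  qed
qed

end
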